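(* Let $\mathfrak g$ be a barrelled locally convex Lie algebra and let $(\pi,V)$ be a continuous unitary representation of $\mathfrak g$. Then the map $\mathfrak g\times V\to V$, $(\xi,\psi)\mapsto\pi(\xi)\psi$, is sequentially continuous when $V$ carries the weak topology, and also when $V$ carries the strong topology.
   Context: Barrelled: every closed, convex, circled, absorbing subset is a $0$-neighbourhood. A unitary representation $(\pi,V)$ of $\mathfrak g$: $V$ complex pre-Hilbert space (completion $\mathcal H_V$), $\pi\colon\mathfrak g\to\mathrm{End}(V)$ a Lie algebra homomorphism with skew-symmetric values. $\pi_n(\xi_n,\dots,\xi_1)=\pi(\xi_n)\cdots\pi(\xi_1)$, $\pi_0(\lambda)=\lambda\mathbf 1$ on $\mathfrak g^0=\mathbb R$. Continuous: for all $n\ge0$, $\psi\in V$, $\boldsymbol\xi\mapsto\pi_n(\boldsymbol\xi)\psi$ is continuous $\mathfrak g^n\to\mathcal H_V$ for the norm. Weak topology on $V$: seminorms $p_{\boldsymbol\xi}(\psi)=\|\pi_n(\boldsymbol\xi)\psi\|$, $\boldsymbol\xi\in\mathfrak g^n$, $n\ge0$. Strong topology: seminorms $p_B(\psi)=\sup_{\boldsymbol\xi\in B}\|\pi_n(\boldsymbol\xi)\psi\|$, $B\subseteq\mathfrak g^n$ bounded, $n\ge0$. *)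

theory Defs
  imports "HOL-Analysis.Analysis"
begin

definition locally_convex_tvs :: "'g::{real_vector,topological_space} itself \<Rightarrow> bool" where
  "locally_convex_tvs _ \<longleftrightarrow>
     continuous_on UNIV (\<lambda>(x::'g, y). x + y) \<and>
     continuous_on UNIV (\<lambda>(c::real, x::'g). c *\<^sub>R x) \<and>
     (\<forall>U::'g set. open U \<and> 0 \<in> U \<longrightarrow> (\<exists>W. open W \<and> 0 \<in> W \<and> convex W \<and> W \<subseteq> U))"

definition circled :: "'g::real_vector set \<Rightarrow> bool" where
  "circled B \<longleftrightarrow> (\<forall>c::real. \<bar>c\<bar> \<le> 1 \<longrightarrow> (\<lambda>x. c *\<^sub>R x) ` B \<subseteq> B)"

definition absorbing :: "'g::real_vector set \<Rightarrow> bool" where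
  "absorbing B \<longleftrightarrow> (\<forall>x. \<exists>t>0. \<forall>c::real. \<bar>c\<bar> \<le> t \<longrightarrow> c *\<^sub>R x \<in> B)"

definition barrelled :: "'g::{real_vector,topological_space} itself \<Rightarrow> bool" where
  "barrelled _ \<longleftrightarrow>
     (\<forall>B::'g set. closed B \<and> convex B \<and> circled B \<and> absorbing B \<longrightarrow>
        (\<exists>U. open U \<and> (0::'g) \<in> U \<and> U \<subseteq> B))"

definition lc_lie_algebra ::
  "('g::{real_vector,topological_space} \<Rightarrow> 'g \<Rightarrow> 'g) \<Rightarrow> bool" where
  "lc_lie_algebra br \<longleftrightarrow>
     locally_convex_tvs TYPE('g) \<and>
     continuous_on UNIV (\<lambda>(x, y). br x y) \<and>
     (\<forall>x y z. br (x + y) z = br x z + br y z) \<and>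
     (\<forall>(c::real) x y. br (c *\<^sub>R x) y = c *\<^sub>R br x y) \<and>
     (\<forall>x y z. br x (y + z) = br x y + br x z) \<and>
     (\<forall>(c::real) x y. br x (c *\<^sub>R y) = c *\<^sub>R br x y) \<and>
     (\<forall>x. br x x = 0) \<and>
     (\<forall>x y z. br x (br y z) + br y (br z x) + br z (br x y) = 0)"

text \<open>An element (xi_n, ..., xi_1) of g^n is a function f on {..<n} with f i = xi_(i+1),
i.e. an element of PiE {..<n} (\<lambda>_. UNIV), carrying the product topology.\<close>

abbreviation gpow_top :: "nat \<Rightarrow> (nat \<Rightarrow> 'g::topological_space) topology" where
  "gpow_top n \<equiv> product_topology (\<lambda>_. euclidean) {..<n}"

text \<open>Boundedness in the topological vector space g^n: B is absorbed by every
0-neighbourhood; it suffices to test the basic (box) neighbourhoods U^n.\<close>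
definition bounded_gpow :: "nat \<Rightarrow> (nat \<Rightarrow> 'g::{real_vector,topological_space}) set \<Rightarrow> bool" where
  "bounded_gpow n B \<longleftrightarrow>
     B \<subseteq> PiE {..<n} (\<lambda>_. UNIV) \<and>
     (\<forall>U::'g set. open U \<and> 0 \<in> U \<longrightarrow>
        (\<exists>t>0. \<forall>s::real. s > t \<longrightarrow> (\<forall>f\<in>B. \<forall>i<n. f i \<in> (\<lambda>x. s *\<^sub>R x) ` U)))"

text \<open>V is a type 'v with complex scalar multiplication sc and inner product ip
(linear in the second, conjugate-linear in the first argument).\<close>
definition complex_pre_hilbert ::
  "(complex \<Rightarrow> 'v::ab_group_add \<Rightarrow> 'v) \<Rightarrow> ('v \<Rightarrow> 'v \<Rightarrow> complex) \<Rightarrow> bool" where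
  "complex_pre_hilbert sc ip \<longleftrightarrow>
     Vector_Spaces.vector_space sc \<and>
     (\<forall>x y. ip x y = cnj (ip y x)) \<and>
     (\<forall>x y z. ip x (y + z) = ip x y + ip x z) \<and>
     (\<forall>c x y. ip x (sc c y) = c * ip x y) \<and>
     (\<forall>x. 0 \<le> Re (ip x x)) \<and>
     (\<forall>x. ip x x = 0 \<longrightarrow> x = 0)"

definition vnorm :: "('v \<Rightarrow> 'v \<Rightarrow> complex) \<Rightarrow> 'v \<Rightarrow> real" where
  "vnorm ip x = sqrt (Re (ip x x))"

definition seminorm_topology :: "('v::ab_group_add \<Rightarrow> real) set \<Rightarrow> 'v topology" where
  "seminorm_topology P = topology (\<lambda>U. \<forall>x\<in>U. \<exists>F \<epsilon>. finite F \<and> F \<subseteq> P \<and> \<epsilon> > 0 \<and>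
        {y. \<forall>p\<in>F. p (y - x) < \<epsilon>} \<subseteq> U)"

text \<open>pi_n (xi_n, ..., xi_1) = rho(xi_n) ... rho(xi_1), with f i = xi_(i+1).\<close>
fun pin :: "('g \<Rightarrow> 'v \<Rightarrow> 'v) \<Rightarrow> nat \<Rightarrow> (nat \<Rightarrow> 'g) \<Rightarrow> 'v \<Rightarrow> 'v" where
  "pin rho 0 f = id"
| "pin rho (Suc n) f = rho (f n) \<circ> pin rho n f"

definition unitary_rep ::
  "('g::real_vector \<Rightarrow> 'g \<Rightarrow> 'g) \<Rightarrow> (complex \<Rightarrow> 'v::ab_group_add \<Rightarrow> 'v) \<Rightarrow>
   ('v \<Rightarrow> 'v \<Rightarrow> complex) \<Rightarrow> ('g \<Rightarrow> 'v \<Rightarrow> 'v) \<Rightarrow> bool" where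
  "unitary_rep br sc ip rho \<longleftrightarrow>
     complex_pre_hilbert sc ip \<and>
     \<comment> \<open>each rho(xi) is a (complex-linear) endomorphism of V\<close>
     (\<forall>x u v. rho x (u + v) = rho x u + rho x v) \<and>
     (\<forall>x c v. rho x (sc c v) = sc c (rho x v)) \<and>
     \<comment> \<open>rho is real-linear\<close>
     (\<forall>x y v. rho (x + y) v = rho x v + rho y v) \<and>
     (\<forall>(a::real) x v. rho (a *\<^sub>R x) v = sc (complex_of_real a) (rho x v)) \<and>
     \<comment> \<open>Lie algebra homomorphism\<close>
     (\<forall>x y v. rho (br x y) v = rho x (rho y v) - rho y (rho x v)) \<and>
     \<comment> \<open>skew-symmetric values\<close>
     (\<forall>x u v. ip (rho x u) v = - ip u (rho x v))"

text \<open>Continuity: for all n and psi, xi \<mapsto> pi_n(xi) psi is continuous from g^n into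
V with the norm topology (equivalently into the completion H_V).\<close>
definition continuous_rep ::
  "('v \<Rightarrow> 'v \<Rightarrow> complex) \<Rightarrow> ('g::topological_space \<Rightarrow> 'v::ab_group_add \<Rightarrow> 'v) \<Rightarrow> bool" where
  "continuous_rep ip rho \<longleftrightarrow>
     (\<forall>n \<psi>. continuous_map (gpow_top n) (seminorm_topology {vnorm ip}) (\<lambda>f. pin rho n f \<psi>))"

definition weak_top :: "('v \<Rightarrow> 'v \<Rightarrow> complex) \<Rightarrow> ('g \<Rightarrow> 'v::ab_group_add \<Rightarrow> 'v) \<Rightarrow> 'v topology" where
  "weak_top ip rho = seminorm_topology
     {(\<lambda>\<psi>. vnorm ip (pin rho n f \<psi>)) | n f. f \<in> PiE {..<n} (\<lambda>_. UNIV)}"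

text \<open>Strong topology: seminorms psi \<mapsto> sup over xi in B of ||pi_n(xi) psi||, B bounded
(empty B gives the zero seminorm and is omitted).\<close>
definition strong_top ::
  "('v \<Rightarrow> 'v \<Rightarrow> complex) \<Rightarrow> ('g::{real_vector,topological_space} \<Rightarrow> 'v::ab_group_add \<Rightarrow> 'v) \<Rightarrow> 'v topology" where
  "strong_top ip rho = seminorm_topology
     {(\<lambda>\<psi>. SUP f\<in>B. vnorm ip (pin rho n f \<psi>)) | n B. B \<noteq> {} \<and> bounded_gpow n B}"

definition seq_cont_action :: "'v topology \<Rightarrow> ('g::topological_space \<Rightarrow> 'v \<Rightarrow> 'v) \<Rightarrow> bool" where
  "seq_cont_action T rho \<longleftrightarrow>
     (\<forall>(\<xi>::nat \<Rightarrow> 'g) \<psi> \<xi>0 \<psi>0.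
        limitin (prod_topology euclidean T) (\<lambda>k. (\<xi> k, \<psi> k)) (\<xi>0, \<psi>0) sequentially \<longrightarrow>
        limitin T (\<lambda>k. rho (\<xi> k) (\<psi> k)) (rho \<xi>0 \<psi>0) sequentially)"

end

theory Submission
  imports Defs
begin


lemma semtop_istop:
  fixes P :: "('v::ab_group_add \<Rightarrow> real) set"
  shows "istopology (\<lambda>U. \<forall>x\<in>U. \<exists>F \<epsilon>. finite F \<and> F \<subseteq> P \<and> \<epsilon> > 0 \<and>
        {y. \<forall>p\<in>F. p (y - x) < \<epsilon>} \<subseteq> U)"
  unfolding istopology_def
proof (intro conjI allI impI)
  fix S T assume S: "\<forall>x\<in>S. \<exists>F \<epsilon>. finite F \<and> F \<subseteq> P \<and> \<epsilon> > 0 \<and> {y. \<forall>p\<in>F. p (y - x) < \<epsilon>} \<subseteq> S"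
    and T: "\<forall>x\<in>T. \<exists>F \<epsilon>. finite F \<and> F \<subseteq> P \<and> \<epsilon> > 0 \<and> {y. \<forall>p\<in>F. p (y - x) < \<epsilon>} \<subseteq> T"
  show "\<forall>x\<in>S \<inter> T. \<exists>F \<epsilon>. finite F \<and> F \<subseteq> P \<and> \<epsilon> > 0 \<and> {y. \<forall>p\<in>F. p (y - x) < \<epsilon>} \<subseteq> S \<inter> T"
  proof
    fix x assume "x \<in> S \<inter> T"
    then have xS: "x \<in> S" and xT: "x \<in> T" by auto
    obtain F1 e1 where a: "finite F1" "F1 \<subseteq> P" "e1 > 0" "{y. \<forall>p\<in>F1. p (y - x) < e1} \<subseteq> S"
      using S xS by meson
    obtain F2 e2 where b: "finite F2" "F2 \<subseteq> P" "e2 > 0" "{y. \<forall>p\<in>F2. p (y - x) < e2} \<subseteq> T"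
      using T xT by meson
    show "\<exists>F \<epsilon>. finite F \<and> F \<subseteq> P \<and> \<epsilon> > 0 \<and> {y. \<forall>p\<in>F. p (y - x) < \<epsilon>} \<subseteq> S \<inter> T"
      apply (rule exI[of _ "F1 \<union> F2"], rule exI[of _ "min e1 e2"])
    proof (intro conjI)
      show "{y. \<forall>p\<in>F1 \<union> F2. p (y - x) < min e1 e2} \<subseteq> S \<inter> T"
      proof
        fix y assume "y \<in> {y. \<forall>p\<in>F1 \<union> F2. p (y - x) < min e1 e2}"
        then have "y \<in> {y. \<forall>p\<in>F1. p (y - x) < e1}" "y \<in> {y. \<forall>p\<in>F2. p (y - x) < e2}" by (auto dest!: bspec simp: min_less_iff_conj)
        then show "y \<in> S \<inter> T" using a(4) b(4) by blast
      qed
    qed (use a b in auto)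
  qed
next
  fix K assume "\<forall>K\<in>K. \<forall>x\<in>K. \<exists>F \<epsilon>. finite F \<and> F \<subseteq> P \<and> \<epsilon> > 0 \<and> {y. \<forall>p\<in>F. p (y - x) < \<epsilon>} \<subseteq> K"
  then show "\<forall>x\<in>\<Union>K. \<exists>F \<epsilon>. finite F \<and> F \<subseteq> P \<and> \<epsilon> > 0 \<and> {y. \<forall>p\<in>F. p (y - x) < \<epsilon>} \<subseteq> \<Union>K"
    by (meson Union_iff subset_iff)
qed

lemma openin_semtop:
  "openin (seminorm_topology P) U \<longleftrightarrow> (\<forall>x\<in>U. \<exists>F \<epsilon>. finite F \<and> F \<subseteq> P \<and> \<epsilon> > 0 \<and>
        {y. \<forall>p\<in>F. p (y - x) < \<epsilon>} \<subseteq> U)"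
  unfolding seminorm_topology_def using semtop_istop[of P] by simp

lemma topspace_semtop[simp]: "topspace (seminorm_topology P) = UNIV"
proof -
  have "openin (seminorm_topology P) UNIV"
    unfolding openin_semtop by (intro ballI exI[of _ "{}"] exI[of _ 1]) auto
  then show ?thesis using openin_subset by blast
qed

lemma openin_ball_semtop:
  assumes p: "p \<in> P" and tri: "\<And>a b. p (a + b) \<le> p a + p b"
  shows "openin (seminorm_topology P) {y. p (y - l) < e}"
  unfolding openin_semtop
proof
  fix z assume z: "z \<in> {y. p (y - l) < e}"
  show "\<exists>F \<epsilon>. finite F \<and> F \<subseteq> P \<and> \<epsilon> > 0 \<and> {y. \<forall>p\<in>F. p (y - z) < \<epsilon>} \<subseteq> {y. p (y - l) < e}"
  proof (intro exI[of _ "{p}"] exI[of _ "e - p (z - l)"] conjI)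
    show "{y. \<forall>q\<in>{p}. q (y - z) < e - p (z - l)} \<subseteq> {y. p (y - l) < e}"
    proof
      fix y assume "y \<in> {y. \<forall>q\<in>{p}. q (y - z) < e - p (z - l)}"
      then have "p (y - z) < e - p (z - l)" by simp
      moreover have "p (y - l) \<le> p (y - z) + p (z - l)"
        using tri[of "y - z" "z - l"] by (simp add: algebra_simps)
      ultimately show "y \<in> {y. p (y - l) < e}" by simp
    qed
  qed (use p z in auto)
qed

lemma limitin_semtop:
  assumes tri: "\<And>p a b. p \<in> P \<Longrightarrow> p (a + b) \<le> p a + p b"
    and z0: "\<And>p. p \<in> P \<Longrightarrow> p 0 = 0"
  shows "limitin (seminorm_topology P) x l F \<longleftrightarrow>
    (\<forall>p\<in>P. \<forall>\<epsilon>>0. eventually (\<lambda>k. p (x k - l) < \<epsilon>) F)"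
proof
  assume L: "limitin (seminorm_topology P) x l F"
  show "\<forall>p\<in>P. \<forall>\<epsilon>>0. eventually (\<lambda>k. p (x k - l) < \<epsilon>) F"
  proof (intro ballI allI impI)
    fix p e assume p: "p \<in> P" and e: "(e::real) > 0"
    have op: "openin (seminorm_topology P) {y. p (y - l) < e}"
      unfolding openin_semtop
    proof
      fix z assume z: "z \<in> {y. p (y - l) < e}"
      show "\<exists>F \<epsilon>. finite F \<and> F \<subseteq> P \<and> \<epsilon> > 0 \<and> {y. \<forall>p\<in>F. p (y - z) < \<epsilon>} \<subseteq> {y. p (y - l) < e}"
      proof (intro exI[of _ "{p}"] exI[of _ "e - p (z - l)"] conjI)
        show "{y. \<forall>q\<in>{p}. q (y - z) < e - p (z - l)} \<subseteq> {y. p (y - l) < e}"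
        proof
          fix y assume "y \<in> {y. \<forall>q\<in>{p}. q (y - z) < e - p (z - l)}"
          then have "p (y - z) < e - p (z - l)" by simp
          moreover have "p (y - l) \<le> p (y - z) + p (z - l)"
            using tri[OF p, of "y - z" "z - l"] by (simp add: algebra_simps)
          ultimately show "y \<in> {y. p (y - l) < e}" by simp
        qed
      qed (use p z in auto)
    qed
    have "l \<in> {y. p (y - l) < e}"
      using z0[OF p] e by simp
    then show "eventually (\<lambda>k. p (x k - l) < e) F"
      using L op unfolding limitin_def by auto
  qed
next
  assume R: "\<forall>p\<in>P. \<forall>\<epsilon>>0. eventually (\<lambda>k. p (x k - l) < \<epsilon>) F"
  show "limitin (seminorm_topology P) x l F"
    unfolding limitin_def
  proof (intro conjI allI impI)
    show "l \<in> topspace (seminorm_topology P)" by simp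
    fix U assume U: "openin (seminorm_topology P) U \<and> l \<in> U"
    then obtain G e where G: "finite G" "G \<subseteq> P" "e > 0" "{y. \<forall>p\<in>G. p (y - l) < e} \<subseteq> U"
      unfolding openin_semtop by meson
    have "eventually (\<lambda>k. \<forall>p\<in>G. p (x k - l) < e) F"
      using G(1,2) R \<open>e>0\<close> by (intro eventually_ball_finite) auto
    then show "eventually (\<lambda>k. x k \<in> U) F"
      by eventually_elim (use G(4) in blast)
  qed
qed


context
  fixes sc :: "complex \<Rightarrow> 'v::ab_group_add \<Rightarrow> 'v" and ip :: "'v \<Rightarrow> 'v \<Rightarrow> complex"
  assumes H: "complex_pre_hilbert sc ip"
begin

lemma vs: "Vector_Spaces.vector_space sc"
  using H unfolding complex_pre_hilbert_def by blast

lemma hyps: "(\<forall>x y. ip x y = cnj (ip y x)) \<and>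
     (\<forall>x y z. ip x (y + z) = ip x y + ip x z) \<and>
     (\<forall>c x y. ip x (sc c y) = c * ip x y) \<and>
     (\<forall>x. 0 \<le> Re (ip x x))"
  using H unfolding complex_pre_hilbert_def by (elim conjE) (intro conjI)

lemma ip_sym: "ip x y = cnj (ip y x)"
  using hyps by (elim conjE) (drule spec[of _ x], drule spec[of _ y], assumption)
lemma ip_add2: "ip x (y + z) = ip x y + ip x z"
  using hyps by (elim conjE) (drule spec[of _ x], drule spec[of _ y], drule spec[of _ z], assumption)
lemma ip_sc2: "ip x (sc c y) = c * ip x y"
  using hyps by (elim conjE) (drule spec[of _ c], drule spec[of _ x], drule spec[of _ y], assumption)
lemma ip_pos: "0 \<le> Re (ip x x)"
  using hyps by (elim conjE) (drule spec[of _ x], assumption)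

definition "ipa x y = Re (ip x y)"

lemma ipa_sym: "ipa x y = ipa y x"
  unfolding ipa_def by (subst ip_sym) simp

lemma ipa_add2: "ipa x (y + z) = ipa x y + ipa x z"
  unfolding ipa_def by (simp add: ip_add2)

lemma ipa_add1: "ipa (y + z) x = ipa y x + ipa z x"
proof -
  have "ipa (y + z) x = ipa x (y + z)" by (rule ipa_sym)
  also have "\<dots> = ipa x y + ipa x z" by (rule ipa_add2)
  also have "\<dots> = ipa y x + ipa z x" using ipa_sym[of x y] ipa_sym[of x z] by simp
  finally show ?thesis .
qed

lemma ipa_sc2: "ipa x (sc (complex_of_real t) y) = t * ipa x y"
  unfolding ipa_def by (simp add: ip_sc2)

lemma ipa_sc1: "ipa (sc (complex_of_real t) y) x = t * ipa y x"
proof -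
  have "ipa (sc (complex_of_real t) y) x = ipa x (sc (complex_of_real t) y)" by (rule ipa_sym)
  also have "\<dots> = t * ipa x y" by (rule ipa_sc2)
  finally show ?thesis using ipa_sym[of x y] by simp
qed

lemma ipa_pos: "0 \<le> ipa x x" unfolding ipa_def by (rule ip_pos)

lemma quad: "0 \<le> ipa x x + 2 * t * ipa x y + t\<^sup>2 * ipa y y"
proof -
  have "0 \<le> ipa (x + sc (complex_of_real t) y) (x + sc (complex_of_real t) y)" by (rule ipa_pos)
  also have "\<dots> = ipa x x + 2 * t * ipa x y + t\<^sup>2 * ipa y y"
    by (simp add: ipa_add1 ipa_add2 ipa_sc1 ipa_sc2 power2_eq_square algebra_simps ipa_sym[of y x])
  finally show ?thesis .
qed

lemma cs: "(ipa x y)\<^sup>2 \<le> ipa x x * ipa y y"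
proof (cases "ipa y y = 0")
  case True
  have "ipa x y = 0"
  proof (rule ccontr)
    assume ne: "ipa x y \<noteq> 0"
    have "0 \<le> ipa x x + 2 * (- (ipa x x + 1) / (2 * ipa x y)) * ipa x y"
      using quad[of x "- (ipa x x + 1) / (2 * ipa x y)" y] True by simp
    also have "\<dots> = - 1" using ne by (simp add: field_simps)
    finally show False by simp
  qed
  then show ?thesis using True by simp
next
  case False
  then have pos: "ipa y y > 0" using ipa_pos[of y] by simp
  have "0 \<le> ipa x x + 2 * (- ipa x y / ipa y y) * ipa x y + (- ipa x y / ipa y y)\<^sup>2 * ipa y y"
    by (rule quad)
  also have "\<dots> = ipa x x - (ipa x y)\<^sup>2 / ipa y y"
    using pos by (simp add: field_simps power2_eq_square)
  finally have "(ipa x y)\<^sup>2 / ipa y y \<le> ipa x x" by simp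
  then show ?thesis using pos by (simp add: field_simps mult.commute)
qed

lemma vnorm_a: "vnorm ip x = sqrt (ipa x x)" unfolding vnorm_def ipa_def ..

lemma vnorm_nonneg: "0 \<le> vnorm ip x" unfolding vnorm_def using ip_pos by simp

lemma vnorm_triangle: "vnorm ip (x + y) \<le> vnorm ip x + vnorm ip y"
proof -
  have "ipa x y \<le> sqrt (ipa x x) * sqrt (ipa y y)"
  proof -
    have "ipa x y \<le> \<bar>ipa x y\<bar>" by simp
    also have "\<bar>ipa x y\<bar> = sqrt ((ipa x y)\<^sup>2)" by simp
    also have "\<dots> \<le> sqrt (ipa x x * ipa y y)" using cs by (rule real_sqrt_le_mono)
    finally show ?thesis by (simp add: real_sqrt_mult)
  qed
  then have "ipa (x + y) (x + y) \<le> (sqrt (ipa x x) + sqrt (ipa y y))\<^sup>2"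
    using ipa_pos[of x] ipa_pos[of y]
    by (simp add: ipa_add1 ipa_add2 ipa_sym[of y x] power2_eq_square algebra_simps)
  then have "sqrt (ipa (x + y) (x + y)) \<le> sqrt ((sqrt (ipa x x) + sqrt (ipa y y))\<^sup>2)"
    by (rule real_sqrt_le_mono)
  then show ?thesis unfolding vnorm_a using ipa_pos[of x] ipa_pos[of y] by simp
qed

lemma vnorm_scale: "vnorm ip (sc (complex_of_real c) x) = \<bar>c\<bar> * vnorm ip x"
proof -
  have "ipa (sc (complex_of_real c) x) (sc (complex_of_real c) x) = c\<^sup>2 * ipa x x"
    by (simp add: ipa_sc1 ipa_sc2 power2_eq_square)
  then show ?thesis unfolding vnorm_a by (simp add: real_sqrt_mult)
qed

lemma md: "module sc" using vs by (simp add: module_iff_vector_space)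

lemma sc_zero[simp]: "sc 0 x = 0" using module.scale_zero_left[OF md] .
lemma sc_zero_r[simp]: "sc c 0 = 0" using module.scale_zero_right[OF md] .
lemma sc_one[simp]: "sc 1 x = x" using module.scale_one[OF md] .
lemma sc_sc[simp]: "sc c (sc d x) = sc (c * d) x" using module.scale_scale[OF md] .
lemma sc_add: "sc c (x + y) = sc c x + sc c y" using module.scale_right_distrib[OF md] .
lemma sc_minus1: "sc (-1) x = - x"
  using module.scale_minus_left[OF md, of 1 x] by simp

lemma vnorm_zero[simp]: "vnorm ip 0 = 0"
  using vnorm_scale[of 0 0] by simp

lemma vnorm_minus: "vnorm ip (- x) = vnorm ip x"
  using vnorm_scale[of "-1" x] sc_minus1 by simp

end


lemma pin_cong: "(\<And>i. i < n \<Longrightarrow> f i = g i) \<Longrightarrow> pin rho n f = pin rho n g"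
  by (induction n) auto

lemma pin_shift: "pin rho (Suc n) g \<psi> = pin rho n (\<lambda>i. g (Suc i)) (rho (g 0) \<psi>)"
  by (induction n arbitrary: \<psi>) auto

context
  fixes br :: "'g::real_vector \<Rightarrow> 'g \<Rightarrow> 'g" and sc :: "complex \<Rightarrow> 'v::ab_group_add \<Rightarrow> 'v"
    and ip :: "'v \<Rightarrow> 'v \<Rightarrow> complex" and rho :: "'g \<Rightarrow> 'v \<Rightarrow> 'v"
  assumes U: "unitary_rep br sc ip rho"
begin

lemma H: "complex_pre_hilbert sc ip" using U[unfolded unitary_rep_def, THEN conjunct1] .
lemmas rho_add2 = U[unfolded unitary_rep_def, THEN conjunct2, THEN conjunct1, rule_format]
lemmas rho_sc2 = U[unfolded unitary_rep_def, THEN conjunct2, THEN conjunct2, THEN conjunct1, rule_format]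
lemmas rho_add1 = U[unfolded unitary_rep_def, THEN conjunct2, THEN conjunct2, THEN conjunct2, THEN conjunct1, rule_format]
lemmas rho_scale1 = U[unfolded unitary_rep_def, THEN conjunct2, THEN conjunct2, THEN conjunct2, THEN conjunct2, THEN conjunct1, rule_format]

lemma rho_zero2[simp]: "rho x 0 = 0"
  using rho_add2[of x 0 0] by simp
lemma rho_minus2: "rho x (- v) = - rho x v"
  using rho_add2[of x v "- v"] by (simp add: eq_neg_iff_add_eq_0 add.commute)
lemma rho_diff2: "rho x (u - v) = rho x u - rho x v"
  using rho_add2[of x u "- v"] rho_minus2[of x v] by simp
lemma rho_zero1[simp]: "rho 0 v = 0"
  using rho_scale1[of 0 0 v] sc_zero[OF H] by simp
lemma rho_diff1: "rho (x - y) v = rho x v - rho y v"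
  using rho_add1[of "x - y" y v] by simp

lemma pin_add: "pin rho n f (u + v) = pin rho n f u + pin rho n f v"
  by (induction n) (auto simp: rho_add2)
lemma pin_zero[simp]: "pin rho n f 0 = 0"
  by (induction n) auto
lemma pin_minus: "pin rho n f (- v) = - pin rho n f v"
  by (induction n) (auto simp: rho_minus2)
lemma pin_diff: "pin rho n f (u - v) = pin rho n f u - pin rho n f v"
  by (induction n) (auto simp: rho_diff2)
lemma pin_sc: "pin rho n f (sc c v) = sc c (pin rho n f v)"
  by (induction n) (auto simp: rho_sc2)

lemma pin_scale:
  "pin rho n (\<lambda>i. c i *\<^sub>R h i) \<phi> = sc (complex_of_real (\<Prod>i<n. c i)) (pin rho n h \<phi>)"
proof (induction n)
  case 0
  then show ?case using sc_one[OF H] by simp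
next
  case (Suc n)
  have "pin rho (Suc n) (\<lambda>i. c i *\<^sub>R h i) \<phi> = rho (c n *\<^sub>R h n) (sc (complex_of_real (\<Prod>i<n. c i)) (pin rho n h \<phi>))"
    using Suc by simp
  also have "\<dots> = sc (complex_of_real (c n)) (sc (complex_of_real (\<Prod>i<n. c i)) (rho (h n) (pin rho n h \<phi>)))"
    by (simp add: rho_scale1 rho_sc2 sc_sc[OF H] mult.commute)
  also have "\<dots> = sc (complex_of_real (\<Prod>i<Suc n. c i)) (pin rho (Suc n) h \<phi>)"
    by (simp add: sc_sc[OF H] mult.commute)
  finally show ?case .
qed

end


context
  assumes TVS: "locally_convex_tvs TYPE('g::{real_vector,topological_space})"
begin

lemma cont_add: "continuous_on UNIV (\<lambda>(x::'g, y). x + y)"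
  and cont_scale: "continuous_on UNIV (\<lambda>(c::real, x::'g). c *\<^sub>R x)"
  using TVS unfolding locally_convex_tvs_def by blast+

lemma cont_aff: "continuous_on UNIV (\<lambda>x::'g. a *\<^sub>R x + b)"
proof -
  have c1: "continuous_on UNIV (\<lambda>x::'g. (a, x))" by (intro continuous_intros)
  have c2: "continuous_on UNIV (\<lambda>x::'g. a *\<^sub>R x)"
    using continuous_on_compose[OF c1 continuous_on_subset[OF cont_scale]] by (simp add: o_def)
  have c3: "continuous_on UNIV (\<lambda>x::'g. (a *\<^sub>R x, b))" using c2 by (intro continuous_intros)
  show ?thesis
    using continuous_on_compose[OF c3 continuous_on_subset[OF cont_add]] by (simp add: o_def)
qed

lemma cont_scal_pt: "continuous_on UNIV (\<lambda>c::real. c *\<^sub>R (x::'g))"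
proof -
  have c1: "continuous_on UNIV (\<lambda>c::real. (c, x))" by (intro continuous_intros)
  show ?thesis
    using continuous_on_compose[OF c1 continuous_on_subset[OF cont_scale]] by (simp add: o_def)
qed

lemma open_aff: "open V \<Longrightarrow> open {x::'g. a *\<^sub>R x + b \<in> V}"
  using continuous_on_open_vimage[of UNIV "\<lambda>x::'g. a *\<^sub>R x + b"] cont_aff[of a b]
  by (simp add: vimage_def)

lemma open_scaled: "open (U::'g set) \<Longrightarrow> s \<noteq> 0 \<Longrightarrow> open ((\<lambda>y. s *\<^sub>R y) ` U)"
proof -
  assume U: "open U" and s: "s \<noteq> 0"
  have "(\<lambda>y. s *\<^sub>R y) ` U = {x. (1/s) *\<^sub>R x + 0 \<in> U}"
  proof (intro set_eqI iffI)
    fix x assume "x \<in> (\<lambda>y. s *\<^sub>R y) ` U"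
    then show "x \<in> {x. (1/s) *\<^sub>R x + 0 \<in> U}" using s by auto
  next
    fix x assume "x \<in> {x. (1/s) *\<^sub>R x + 0 \<in> U}"
    then have "(1/s) *\<^sub>R x \<in> U" by simp
    moreover have "x = s *\<^sub>R ((1/s) *\<^sub>R x)" using s by simp
    ultimately show "x \<in> (\<lambda>y. s *\<^sub>R y) ` U" by blast
  qed
  then show ?thesis using open_aff[OF U, of "1/s" 0] by simp
qed

lemma absorb: "open (U::'g set) \<Longrightarrow> 0 \<in> U \<Longrightarrow> \<exists>t>0. \<forall>s>t. x \<in> (\<lambda>y. s *\<^sub>R y) ` U"
proof -
  assume U: "open U" "0 \<in> U"
  have "open ((\<lambda>c::real. c *\<^sub>R x) -` U)"
    using continuous_on_open_vimage[of UNIV "\<lambda>c::real. c *\<^sub>R x"] cont_scal_pt[of x] U(1) by simp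
  moreover have "0 \<in> (\<lambda>c::real. c *\<^sub>R x) -` U" using U(2) by simp
  ultimately obtain d where d: "d > 0" "ball 0 d \<subseteq> (\<lambda>c::real. c *\<^sub>R x) -` U"
    using open_contains_ball by blast
  show ?thesis
  proof (intro exI[of _ "1/d"] conjI allI impI)
    show "1/d > 0" using d by simp
    fix s assume s: "s > 1/d"
    then have sp: "s > 0" using d(1) by (meson less_trans zero_less_divide_1_iff)
    have "1/s < d" using s d(1) sp by (simp add: field_simps)
    then have "1/s \<in> ball 0 d" using sp by (simp add: dist_norm)
    then have "(1/s) \<in> (\<lambda>c::real. c *\<^sub>R x) -` U" using d(2) by blast
    then have "(1/s) *\<^sub>R x \<in> U" by simp
    moreover have "x = s *\<^sub>R ((1/s) *\<^sub>R x)" using sp by simp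
    ultimately show "x \<in> (\<lambda>y. s *\<^sub>R y) ` U" by blast
  qed
qed

lemma absorb_fin: assumes U: "open (U::'g set)" "0 \<in> U" and fin: "finite X" shows
   "\<exists>t>0. \<forall>s>t. \<forall>x\<in>X. x \<in> (\<lambda>y. s *\<^sub>R y) ` U"
  using fin
proof (induction X rule: finite_induct)
  case empty
  then show ?case by (intro exI[of _ 1]) auto
next
  case (insert x F)
  then obtain t1 where t1: "t1 > 0" "\<forall>s>t1. \<forall>x\<in>F. x \<in> (\<lambda>y. s *\<^sub>R y) ` U" by blast
  obtain t2 where t2: "t2 > 0" "\<forall>s>t2. x \<in> (\<lambda>y. s *\<^sub>R y) ` U" using absorb U by blast
  show ?case using t1 t2 by (intro exI[of _ "max t1 t2"]) auto
qed

lemma ev_diff: "(\<xi> \<longlongrightarrow> (\<xi>0::'g)) F \<Longrightarrow> open V \<Longrightarrow> 0 \<in> V \<Longrightarrow> eventually (\<lambda>k. \<xi> k - \<xi>0 \<in> V) F"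
proof -
  assume L: "(\<xi> \<longlongrightarrow> \<xi>0) F" and V: "open V" "0 \<in> V"
  have "open {x. 1 *\<^sub>R x + (- \<xi>0) \<in> V}" using open_aff[OF V(1)] .
  moreover have "\<xi>0 \<in> {x. 1 *\<^sub>R x + (- \<xi>0) \<in> V}" using V(2) by simp
  ultimately have "eventually (\<lambda>k. \<xi> k \<in> {x. 1 *\<^sub>R x + (- \<xi>0) \<in> V}) F"
    using topological_tendstoD[OF L] by blast
  then show ?thesis by simp
qed

end


lemma core:
  assumes U: "unitary_rep br sc ip rho" and CR: "continuous_rep ip (rho :: 'g::{real_vector,topological_space} \<Rightarrow> 'v::ab_group_add \<Rightarrow> 'v)"
  shows "\<exists>W. open W \<and> (0::'g) \<in> W \<and> (\<forall>c h. (\<forall>i<Suc n. h i \<in> W) \<longrightarrow>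
      vnorm ip (pin rho (Suc n) (\<lambda>i. c i *\<^sub>R h i) \<phi>) \<le> \<bar>\<Prod>i<Suc n. c i\<bar>)"
proof -
  have HH: "complex_pre_hilbert sc ip" using H[OF U] .
  let ?m = "Suc n"
  have cm: "continuous_map (gpow_top ?m) (seminorm_topology {vnorm ip}) (\<lambda>f. pin rho ?m f \<phi>)"
    using CR unfolding continuous_rep_def by blast
  have ob: "openin (seminorm_topology {vnorm ip}) {y. vnorm ip (y - 0) < 1}"
    by (rule openin_ball_semtop) (auto intro: vnorm_triangle[OF HH])
  define S where "S = {x \<in> topspace (gpow_top ?m :: (nat \<Rightarrow> 'g) topology). pin rho ?m x \<phi> \<in> {y. vnorm ip (y - 0) < 1}}"
  have oS: "openin (gpow_top ?m) S" unfolding S_def by (rule openin_continuous_map_preimage[OF cm ob])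
  define z0 :: "nat \<Rightarrow> 'g" where "z0 = (\<lambda>i. if i < ?m then 0 else undefined)"
  have "pin rho ?m z0 \<phi> = 0" unfolding z0_def using rho_zero1[OF U] by simp
  then have z0S: "z0 \<in> S" unfolding S_def using vnorm_zero[OF HH] unfolding z0_def by (auto simp: PiE_def extensional_def)
  obtain Ui where Ui: "\<forall>i\<in>{..<?m}. openin euclidean (Ui i)" "z0 \<in> PiE {..<?m} Ui" "PiE {..<?m} Ui \<subseteq> S"
    using oS z0S unfolding openin_product_topology_alt by meson
  define W where "W = (\<Inter>i\<in>{..<?m}. Ui i)"
  have oW: "open W" unfolding W_def using Ui(1) by (intro open_INT) auto
  have W0: "0 \<in> W" unfolding W_def using Ui(2) unfolding z0_def PiE_def Pi_def by auto
  show ?thesis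
  proof (intro exI[of _ W] conjI oW W0 allI impI)
    fix c h assume h: "\<forall>i<?m. h i \<in> W"
    have "restrict h {..<?m} \<in> PiE {..<?m} Ui" using h unfolding W_def by auto
    then have "restrict h {..<?m} \<in> S" using Ui(3) by blast
    then have "vnorm ip (pin rho ?m (restrict h {..<?m}) \<phi>) < 1" unfolding S_def by simp
    moreover have "pin rho ?m (restrict h {..<?m}) = pin rho ?m h" by (rule pin_cong) simp
    ultimately have lt: "vnorm ip (pin rho ?m h \<phi>) < 1" by (simp only:)
    have "vnorm ip (pin rho ?m (\<lambda>i. c i *\<^sub>R h i) \<phi>) = \<bar>\<Prod>i<?m. c i\<bar> * vnorm ip (pin rho ?m h \<phi>)"
      by (simp only: pin_scale[OF U] vnorm_scale[OF HH])
    also have "\<dots> \<le> \<bar>\<Prod>i<?m. c i\<bar>" using lt vnorm_nonneg[OF HH, of "pin rho ?m h \<phi>"]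
      by (simp add: mult_left_le)
    finally show "vnorm ip (pin rho ?m (\<lambda>i. c i *\<^sub>R h i) \<phi>) \<le> \<bar>\<Prod>i<?m. c i\<bar>" .
  qed
qed



definition SN :: "('v \<Rightarrow> 'v \<Rightarrow> complex) \<Rightarrow> ('g \<Rightarrow> 'v \<Rightarrow> 'v) \<Rightarrow> nat \<Rightarrow> (nat \<Rightarrow> 'g) set \<Rightarrow> 'v \<Rightarrow> real" where
  "SN ip rho n B \<psi> = (SUP f\<in>B. vnorm ip (pin rho n f \<psi>))"

definition bddg :: "nat \<Rightarrow> (nat \<Rightarrow> 'g::{real_vector,topological_space}) set \<Rightarrow> bool" where
  "bddg n B \<longleftrightarrow> (\<forall>U::'g set. open U \<and> 0 \<in> U \<longrightarrow>
        (\<exists>t>0. \<forall>s::real. s > t \<longrightarrow> (\<forall>f\<in>B. \<forall>i<n. f i \<in> (\<lambda>x. s *\<^sub>R x) ` U)))"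

definition sh :: "nat \<Rightarrow> 'g \<Rightarrow> (nat \<Rightarrow> 'g) \<Rightarrow> nat \<Rightarrow> 'g" where
  "sh n \<xi> f = (\<lambda>i. if i = 0 then \<xi> else if i < Suc n then f (i - 1) else undefined)"

lemma SN_sh: "SN ip rho (Suc n) (sh n \<xi> ` B) w = SN ip rho n B (rho \<xi> w)"
proof -
  have "\<And>f. pin rho (Suc n) (sh n \<xi> f) w = pin rho n f (rho \<xi> w)"
  proof -
    fix f
    have "pin rho (Suc n) (sh n \<xi> f) w = pin rho n (\<lambda>i. sh n \<xi> f (Suc i)) (rho (sh n \<xi> f 0) w)"
      by (rule pin_shift)
    also have "pin rho n (\<lambda>i. sh n \<xi> f (Suc i)) = pin rho n f"
      by (rule pin_cong) (simp add: sh_def)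
    finally show "pin rho (Suc n) (sh n \<xi> f) w = pin rho n f (rho \<xi> w)" by (simp add: sh_def)
  qed
  then show ?thesis unfolding SN_def image_image by simp
qed

context
  fixes br :: "'g::{real_vector,topological_space} \<Rightarrow> 'g \<Rightarrow> 'g" and sc :: "complex \<Rightarrow> 'v::ab_group_add \<Rightarrow> 'v"
    and ip :: "'v \<Rightarrow> 'v \<Rightarrow> complex" and rho :: "'g \<Rightarrow> 'v \<Rightarrow> 'v"
  assumes U: "unitary_rep br sc ip rho" and CR: "continuous_rep ip rho"
    and TVS: "locally_convex_tvs TYPE('g)"
begin

lemma HH: "complex_pre_hilbert sc ip" using H[OF U] .

lemma SN_bdd:
  assumes b: "bddg n B"
  shows "bdd_above ((\<lambda>f. vnorm ip (pin rho n f \<psi>)) ` B)"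
proof (cases n)
  case 0
  show ?thesis by (rule bdd_aboveI[of _ "vnorm ip \<psi>"]) (auto simp: 0)
next
  case (Suc m)
  obtain W where W: "open W" "(0::'g) \<in> W" "\<forall>c h. (\<forall>i<Suc m. h i \<in> W) \<longrightarrow>
      vnorm ip (pin rho (Suc m) (\<lambda>i. c i *\<^sub>R h i) \<psi>) \<le> \<bar>\<Prod>i<Suc m. c i\<bar>"
    using core[OF U CR, of m \<psi>] by (elim exE conjE) (intro that)
  obtain t where t: "t > 0" "\<forall>s>t. \<forall>f\<in>B. \<forall>i<n. f i \<in> (\<lambda>x. s *\<^sub>R x) ` W"
    using b[unfolded bddg_def, rule_format, OF conjI[OF W(1) W(2)]] by (elim exE conjE) (intro that)
  define s where "s = t + 1"
  have sp: "s > 0" "s > t" using t(1) unfolding s_def by auto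
  show ?thesis
  proof (rule bdd_aboveI[of _ "\<bar>\<Prod>i<Suc m. s\<bar>"])
    fix y assume "y \<in> (\<lambda>f. vnorm ip (pin rho n f \<psi>)) ` B"
    then obtain f where f: "f \<in> B" "y = vnorm ip (pin rho n f \<psi>)" by blast
    have hW: "\<forall>i<Suc m. (1/s) *\<^sub>R f i \<in> W"
    proof (intro allI impI)
      fix i assume "i < Suc m"
      then have "i < n" using Suc by simp
      then have "f i \<in> (\<lambda>x. s *\<^sub>R x) ` W" using t(2) sp(2) f(1) by blast
      then obtain u where "u \<in> W" "f i = s *\<^sub>R u" by (rule imageE) simp
      then show "(1/s) *\<^sub>R f i \<in> W" using sp(1) by simp
    qed
    have "pin rho (Suc m) (\<lambda>i. s *\<^sub>R ((1/s) *\<^sub>R f i)) = pin rho (Suc m) f"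
      by (rule pin_cong) (use sp(1) in simp)
    moreover have "vnorm ip (pin rho (Suc m) (\<lambda>i. s *\<^sub>R ((1/s) *\<^sub>R f i)) \<psi>) \<le> \<bar>\<Prod>i<Suc m. s\<bar>"
      using W(3)[rule_format, where c="\<lambda>_. s" and h="\<lambda>i. (1/s) *\<^sub>R f i"] hW by blast
    ultimately have "vnorm ip (pin rho (Suc m) f \<psi>) \<le> \<bar>\<Prod>i<Suc m. s\<bar>" by (simp only:)
    then show "y \<le> \<bar>\<Prod>i<Suc m. s\<bar>"
      using f(2) Suc by (simp only:)
  qed
qed

lemma SN_ub: "bddg n B \<Longrightarrow> f \<in> B \<Longrightarrow> vnorm ip (pin rho n f \<psi>) \<le> SN ip rho n B \<psi>"
  unfolding SN_def by (rule cSUP_upper) (auto intro: SN_bdd)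

lemma SN_nonneg: "B \<noteq> {} \<Longrightarrow> bddg n B \<Longrightarrow> 0 \<le> SN ip rho n B \<psi>"
proof -
  assume "B \<noteq> {}" "bddg n B"
  then obtain f where "f \<in> B" by blast
  then show ?thesis using SN_ub[OF \<open>bddg n B\<close> \<open>f \<in> B\<close>, of \<psi>] vnorm_nonneg[OF HH] by (meson order_trans)
qed

lemma SN_zero: "B \<noteq> {} \<Longrightarrow> SN ip rho n B 0 = 0"
  unfolding SN_def using pin_zero[OF U] vnorm_zero[OF HH] by simp

lemma SN_tri: "B \<noteq> {} \<Longrightarrow> bddg n B \<Longrightarrow> SN ip rho n B (a + b) \<le> SN ip rho n B a + SN ip rho n B b"
  unfolding SN_def
proof (rule cSUP_least)
  fix f assume B: "B \<noteq> {}" "bddg n B" and f: "f \<in> B"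
  have "vnorm ip (pin rho n f (a + b)) \<le> vnorm ip (pin rho n f a) + vnorm ip (pin rho n f b)"
    unfolding pin_add[OF U] by (rule vnorm_triangle[OF HH])
  also have "\<dots> \<le> SN ip rho n B a + SN ip rho n B b"
    using SN_ub[OF B(2) f] by (meson add_mono)
  finally show "vnorm ip (pin rho n f (a + b)) \<le> (SUP f\<in>B. vnorm ip (pin rho n f a)) + (SUP f\<in>B. vnorm ip (pin rho n f b))"
    unfolding SN_def .
qed

lemma SN_scale: "B \<noteq> {} \<Longrightarrow> bddg n B \<Longrightarrow> SN ip rho n B (sc (complex_of_real c) a) \<le> \<bar>c\<bar> * SN ip rho n B a"
  unfolding SN_def
proof (rule cSUP_least)
  fix f assume B: "B \<noteq> {}" "bddg n B" and f: "f \<in> B"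
  have "vnorm ip (pin rho n f (sc (complex_of_real c) a)) = \<bar>c\<bar> * vnorm ip (pin rho n f a)"
    unfolding pin_sc[OF U] by (rule vnorm_scale[OF HH])
  also have "\<dots> \<le> \<bar>c\<bar> * SN ip rho n B a"
    using SN_ub[OF B(2) f] by (simp add: mult_left_mono)
  finally show "vnorm ip (pin rho n f (sc (complex_of_real c) a)) \<le> \<bar>c\<bar> * (SUP f\<in>B. vnorm ip (pin rho n f a))"
    unfolding SN_def .
qed

lemma SN_small:
  assumes B: "B \<noteq> {}" "bddg n B"
  shows "\<exists>W M. open W \<and> (0::'g) \<in> W \<and> M \<ge> 0 \<and>
     (\<forall>\<delta>>0. \<forall>z\<in>(\<lambda>x. \<delta> *\<^sub>R x) ` W. SN ip rho n B (rho z \<phi>) \<le> M * \<delta>)"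
proof -
  obtain W where W: "open W" "(0::'g) \<in> W" "\<forall>c h. (\<forall>i<Suc n. h i \<in> W) \<longrightarrow>
      vnorm ip (pin rho (Suc n) (\<lambda>i. c i *\<^sub>R h i) \<phi>) \<le> \<bar>\<Prod>i<Suc n. c i\<bar>"
    using core[OF U CR, of n \<phi>] by (elim exE conjE) (intro that)
  obtain t where t: "t > 0" "\<forall>s>t. \<forall>f\<in>B. \<forall>i<n. f i \<in> (\<lambda>x. s *\<^sub>R x) ` W"
    using B(2)[unfolded bddg_def, rule_format, OF conjI[OF W(1) W(2)]] by (elim exE conjE) (intro that)
  define s where "s = t + 1"
  have sp: "s > 0" "s > t" using t(1) unfolding s_def by auto
  show ?thesis
  proof (intro exI[of _ W] exI[of _ "s ^ n"] conjI W(1) W(2) allI impI ballI)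
    show "0 \<le> s ^ n" using sp by simp
    fix \<delta> :: real and z assume d: "\<delta> > 0" and z: "z \<in> (\<lambda>x. \<delta> *\<^sub>R x) ` W"
    from z obtain u where u: "u \<in> W" "z = \<delta> *\<^sub>R u" by blast
    show "SN ip rho n B (rho z \<phi>) \<le> s ^ n * \<delta>"
      unfolding SN_def
    proof (rule cSUP_least[OF B(1)])
      fix f assume f: "f \<in> B"
      define c where "c = (\<lambda>i::nat. if i = 0 then \<delta> else s)"
      define h where "h = (\<lambda>i. if i = 0 then u else (1/s) *\<^sub>R f (i - 1))"
      have hW: "\<forall>i<Suc n. h i \<in> W"
      proof (intro allI impI)
        fix i assume i: "i < Suc n"
        show "h i \<in> W"
        proof (cases i)
          case 0
          then show ?thesis unfolding h_def using u by simp
        next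
          case (Suc j)
          then have "j < n" using i by simp
          then have "f j \<in> (\<lambda>x. s *\<^sub>R x) ` W" using t(2) sp(2) f by blast
          then obtain v where "v \<in> W" "f j = s *\<^sub>R v" by (rule imageE) simp
          then show ?thesis unfolding h_def using Suc sp(1) by simp
        qed
      qed
      have est: "vnorm ip (pin rho (Suc n) (\<lambda>i. c i *\<^sub>R h i) \<phi>) \<le> \<bar>\<Prod>i<Suc n. c i\<bar>"
        using W(3)[rule_format, where c=c and h=h] hW by blast
      have pr: "(\<Prod>i<Suc n. c i) = \<delta> * s ^ n"
        unfolding prod.lessThan_Suc_shift c_def by simp
      have "pin rho (Suc n) (\<lambda>i. c i *\<^sub>R h i) \<phi> = pin rho n (\<lambda>i. c (Suc i) *\<^sub>R h (Suc i)) (rho (c 0 *\<^sub>R h 0) \<phi>)"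
        by (rule pin_shift)
      also have "pin rho n (\<lambda>i. c (Suc i) *\<^sub>R h (Suc i)) = pin rho n f"
        by (rule pin_cong) (use sp(1) in \<open>simp add: c_def h_def\<close>)
      also have "c 0 *\<^sub>R h 0 = z" unfolding c_def h_def using u by simp
      finally have "pin rho (Suc n) (\<lambda>i. c i *\<^sub>R h i) \<phi> = pin rho n f (rho z \<phi>)" .
      moreover have "\<bar>\<Prod>i<Suc n. c i\<bar> = s ^ n * \<delta>"
        unfolding pr using d sp(1) by (simp add: mult.commute)
      ultimately show "vnorm ip (pin rho n f (rho z \<phi>)) \<le> s ^ n * \<delta>"
        using est by (simp only:)
    qed
  qed
qed

lemma Q_closed:
  assumes B: "B \<noteq> {}" "bddg n B"
  shows "closed {z. SN ip rho n B (rho z \<phi>) \<le> 1}"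
proof -
  let ?Q = "\<lambda>z. SN ip rho n B (rho z \<phi>)"
  obtain W M where W: "open W" "(0::'g) \<in> W" "M \<ge> 0"
    "\<forall>\<delta>>0. \<forall>z\<in>(\<lambda>x. \<delta> *\<^sub>R x) ` W. ?Q z \<le> M * \<delta>"
    using SN_small[OF B, of \<phi>] by (elim exE conjE) (intro that)
  have "open (- {z. ?Q z \<le> 1})"
    unfolding open_subopen[of "- {z. ?Q z \<le> 1}"]
  proof
    fix y assume "y \<in> - {z. ?Q z \<le> 1}"
    then have y: "?Q y > 1" by simp
    define \<eta> where "\<eta> = ?Q y - 1"
    have eta: "\<eta> > 0" using y unfolding \<eta>_def by simp
    define \<delta> where "\<delta> = \<eta> / (M + 1)"
    have dp: "\<delta> > 0" unfolding \<delta>_def using eta W(3) by simp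
    have Md: "M * \<delta> < \<eta>"
    proof -
      have "M * \<delta> = \<eta> * (M / (M + 1))" unfolding \<delta>_def using W(3) by (simp add: field_simps)
      also have "\<dots> < \<eta> * 1" using eta W(3) by (intro mult_strict_left_mono) auto
      finally show ?thesis by simp
    qed
    define T where "T = {x. (-1) *\<^sub>R x + y \<in> (\<lambda>x. \<delta> *\<^sub>R x) ` W}"
    have oT: "open T" unfolding T_def
      by (rule open_aff[OF TVS open_scaled[OF TVS W(1)]]) (use dp in simp)
    have yT: "y \<in> T" unfolding T_def using W(2) by (auto intro: image_eqI[of 0 _ 0])
    have "T \<subseteq> - {z. ?Q z \<le> 1}"
    proof
      fix x assume "x \<in> T"
      then have "y - x \<in> (\<lambda>x. \<delta> *\<^sub>R x) ` W" unfolding T_def by simp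
      then have small: "?Q (y - x) \<le> M * \<delta>" using W(4) dp by blast
      have "rho y \<phi> = rho x \<phi> + rho (y - x) \<phi>"
        using rho_add1[OF U, of x "y - x" \<phi>] by simp
      then have "?Q y \<le> ?Q x + ?Q (y - x)" using SN_tri[OF B] by simp
      then show "x \<in> - {z. ?Q z \<le> 1}" using small Md unfolding \<eta>_def by simp
    qed
    then show "\<exists>T. open T \<and> y \<in> T \<and> T \<subseteq> - {z. ?Q z \<le> 1}" using oT yT by blast
  qed
  then show ?thesis by (simp add: closed_def)
qed

lemma Q_tri: "B \<noteq> {} \<Longrightarrow> bddg n B \<Longrightarrow>
  SN ip rho n B (rho (x + y) \<phi>) \<le> SN ip rho n B (rho x \<phi>) + SN ip rho n B (rho y \<phi>)"
  unfolding rho_add1[OF U] by (rule SN_tri)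

lemma Q_scale: "B \<noteq> {} \<Longrightarrow> bddg n B \<Longrightarrow>
  SN ip rho n B (rho (c *\<^sub>R x) \<phi>) \<le> \<bar>c\<bar> * SN ip rho n B (rho x \<phi>)"
  unfolding rho_scale1[OF U] by (rule SN_scale)

lemma main_generic:
  assumes BAR: "barrelled TYPE('g)"
    and Cp1: "\<And>n B. Cp n B \<Longrightarrow> B \<noteq> {} \<and> bddg n B"
    and Cp2: "\<And>n B \<xi>. Cp n B \<Longrightarrow> Cp (Suc n) (sh n \<xi> ` B)"
  shows "seq_cont_action (seminorm_topology {(\<lambda>\<psi>. SN ip rho n B \<psi>) | n B. Cp n B}) rho"
proof -
  define P where "P = {(\<lambda>\<psi>. SN ip rho n B \<psi>) | n B. Cp n B}"
  have memP: "\<And>p. p \<in> P \<Longrightarrow> \<exists>n B. Cp n B \<and> p = (\<lambda>\<psi>. SN ip rho n B \<psi>)"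
    unfolding P_def by (simp only: mem_Collect_eq) (elim exE conjE, intro exI conjI, assumption+)
  have tri: "\<And>p a b. p \<in> P \<Longrightarrow> p (a + b) \<le> p a + p b"
  proof -
    fix p a b assume "p \<in> P"
    obtain n B where "Cp n B" "p = (\<lambda>\<psi>. SN ip rho n B \<psi>)" using memP[OF \<open>p \<in> P\<close>] by (elim exE conjE) (intro that)
    then show "p (a + b) \<le> p a + p b" using SN_tri Cp1 by simp
  qed
  have z0: "\<And>p. p \<in> P \<Longrightarrow> p 0 = 0"
  proof -
    fix p assume "p \<in> P"
    obtain n B where "Cp n B" "p = (\<lambda>\<psi>. SN ip rho n B \<psi>)" using memP[OF \<open>p \<in> P\<close>] by (elim exE conjE) (intro that)
    then show "p 0 = 0" using SN_zero Cp1 by simp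
  qed
  have LIM: "\<And>(x :: nat \<Rightarrow> 'v) l F. limitin (seminorm_topology P) x l F \<longleftrightarrow>
      (\<forall>p\<in>P. \<forall>\<epsilon>>0. eventually (\<lambda>k. p (x k - l) < \<epsilon>) F)"
    by (rule limitin_semtop) (erule tri, erule z0)
  show ?thesis unfolding P_def[symmetric] seq_cont_action_def
  proof (intro allI impI)
    fix \<xi> :: "nat \<Rightarrow> 'g" and \<psi> \<xi>0 \<psi>0
    assume L: "limitin (prod_topology euclidean (seminorm_topology P)) (\<lambda>k. (\<xi> k, \<psi> k)) (\<xi>0, \<psi>0) sequentially"
    then have "limitin euclidean \<xi> \<xi>0 sequentially" "limitin (seminorm_topology P) \<psi> \<psi>0 sequentially"
      unfolding limitin_pairwise by (simp_all add: o_def)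
    then have Lx: "\<xi> \<longlonglongrightarrow> \<xi>0" and Hp: "\<forall>p\<in>P. \<forall>\<epsilon>>0. eventually (\<lambda>k. p (\<psi> k - \<psi>0) < \<epsilon>) sequentially"
      using LIM by auto
    have HC: "\<And>m B' e. Cp m B' \<Longrightarrow> e > 0 \<Longrightarrow> eventually (\<lambda>k. SN ip rho m B' (\<psi> k - \<psi>0) < e) sequentially"
    proof -
      fix m B' and e :: real assume "Cp m B'" "e > 0"
      then have "(\<lambda>\<psi>. SN ip rho m B' \<psi>) \<in> P" unfolding P_def by blast
      from Hp[rule_format, OF this \<open>e > 0\<close>]
      show "eventually (\<lambda>k. SN ip rho m B' (\<psi> k - \<psi>0) < e) sequentially" .
    qed
    show "limitin (seminorm_topology P) (\<lambda>k. rho (\<xi> k) (\<psi> k)) (rho \<xi>0 \<psi>0) sequentially"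
      unfolding LIM
    proof (intro ballI allI impI)
      fix p and \<epsilon> :: real assume pP: "p \<in> P" and ep: "\<epsilon> > 0"
      obtain n B where Cnb: "Cp n B" and pdef: "p = (\<lambda>\<psi>. SN ip rho n B \<psi>)" using memP[OF pP] by (elim exE conjE) (intro that)
      have Bne: "B \<noteq> {}" and Bb: "bddg n B" using Cp1[OF Cnb] by auto
      let ?S = "SN ip rho n B"
      have E2: "eventually (\<lambda>k. ?S (rho \<xi>0 (\<psi> k - \<psi>0)) < \<epsilon>/3) sequentially"
        using HC[OF Cp2[OF Cnb, of \<xi>0], of "\<epsilon>/3"] ep unfolding SN_sh by simp
      obtain W M where W: "open W" "(0::'g) \<in> W" "M \<ge> 0"
        "\<forall>\<delta>>0. \<forall>z\<in>(\<lambda>x. \<delta> *\<^sub>R x) ` W. ?S (rho z \<psi>0) \<le> M * \<delta>"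
        using SN_small[OF Bne Bb, of \<psi>0] by (elim exE conjE) (intro that)
      define d3 where "d3 = \<epsilon> / (3 * (M + 1))"
      have d3p: "d3 > 0" unfolding d3_def using ep W(3) by simp
      have Md3: "M * d3 < \<epsilon> / 3"
      proof -
        have "M * d3 = (\<epsilon> / 3) * (M / (M + 1))" unfolding d3_def using W(3) by (simp add: field_simps)
        also have "\<dots> < (\<epsilon> / 3) * 1" using ep W(3) by (intro mult_strict_left_mono) auto
        finally show ?thesis by simp
      qed
      have "eventually (\<lambda>k. \<xi> k - \<xi>0 \<in> (\<lambda>x. d3 *\<^sub>R x) ` W) sequentially"
        by (rule ev_diff[OF TVS Lx open_scaled[OF TVS W(1)]]) (use d3p W(2) in \<open>auto intro: image_eqI[of 0 _ 0]\<close>)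
      then have E3: "eventually (\<lambda>k. ?S (rho (\<xi> k - \<xi>0) \<psi>0) < \<epsilon>/3) sequentially"
        by eventually_elim (use W(4) d3p Md3 in force)
      \<comment> \<open>first term: barrel\<close>
      define Q where "Q = (\<lambda>k z. ?S (rho z (\<psi> k - \<psi>0)))"
      define D where "D = {z. \<forall>k. Q k z \<le> 1}"
      have Qn: "\<And>k z. 0 \<le> Q k z" unfolding Q_def using SN_nonneg[OF Bne Bb] .
      have cD: "closed D"
      proof -
        have "D = (\<Inter>k\<in>UNIV. {z. Q k z \<le> 1})" unfolding D_def by auto
        then show ?thesis unfolding Q_def using Q_closed[OF Bne Bb] by auto
      qed
      have convD: "convex D"
        unfolding convex_def
      proof (intro ballI allI impI)
        fix x y and u v :: real assume x: "x \<in> D" and y: "y \<in> D" and uv: "0 \<le> u" "0 \<le> v" "u + v = 1"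
        show "u *\<^sub>R x + v *\<^sub>R y \<in> D" unfolding D_def
        proof (intro CollectI allI)
          fix k
          have "Q k (u *\<^sub>R x + v *\<^sub>R y) \<le> Q k (u *\<^sub>R x) + Q k (v *\<^sub>R y)"
            unfolding Q_def by (rule Q_tri[OF Bne Bb])
          also have "\<dots> \<le> \<bar>u\<bar> * Q k x + \<bar>v\<bar> * Q k y"
            unfolding Q_def by (intro add_mono Q_scale[OF Bne Bb])
          also have "\<dots> \<le> u + v"
          proof (rule add_mono)
            show "\<bar>u\<bar> * Q k x \<le> u" using x uv unfolding D_def by (simp add: mult_left_le)
            show "\<bar>v\<bar> * Q k y \<le> v" using y uv unfolding D_def by (simp add: mult_left_le)
          qed
          finally show "Q k (u *\<^sub>R x + v *\<^sub>R y) \<le> 1" using uv by simp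
        qed
      qed
      have circD: "circled D"
        unfolding circled_def
      proof (intro allI impI subsetI)
        fix c :: real and y assume c: "\<bar>c\<bar> \<le> 1" and "y \<in> (\<lambda>x. c *\<^sub>R x) ` D"
        then obtain x where x: "x \<in> D" "y = c *\<^sub>R x" by blast
        show "y \<in> D" unfolding D_def
        proof (intro CollectI allI)
          fix k
          have "Q k y \<le> \<bar>c\<bar> * Q k x" unfolding Q_def x(2) by (rule Q_scale[OF Bne Bb])
          also have "\<dots> \<le> 1 * 1" using c x(1) Qn[of k x] unfolding D_def by (intro mult_mono) auto
          finally show "Q k y \<le> 1" by simp
        qed
      qed
      have absD: "absorbing D"
        unfolding absorbing_def
      proof
        fix x
        have "eventually (\<lambda>k. Q k x < 1) sequentially"
          using HC[OF Cp2[OF Cnb, of x], of 1] unfolding SN_sh Q_def by simp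
        then obtain N where N: "\<And>k. k \<ge> N \<Longrightarrow> Q k x < 1" unfolding eventually_sequentially by blast
        define K where "K = 1 + (\<Sum>k<N. Q k x)"
        have K1: "K \<ge> 1" unfolding K_def using Qn by (simp add: sum_nonneg)
        have QK: "\<And>k. Q k x \<le> K"
        proof -
          fix k show "Q k x \<le> K"
          proof (cases "k < N")
            case True
            then have "Q k x \<le> (\<Sum>k<N. Q k x)" by (intro member_le_sum) (auto simp: Qn)
            then show ?thesis unfolding K_def by simp
          next
            case False
            then show ?thesis using N[of k] K1 by simp
          qed
        qed
        show "\<exists>t>0. \<forall>c. \<bar>c\<bar> \<le> t \<longrightarrow> c *\<^sub>R x \<in> D"
        proof (intro exI[of _ "1/K"] conjI allI impI)
          show "1/K > 0" using K1 by simp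
          fix c :: real assume c: "\<bar>c\<bar> \<le> 1/K"
          show "c *\<^sub>R x \<in> D" unfolding D_def
          proof (intro CollectI allI)
            fix k
            have "Q k (c *\<^sub>R x) \<le> \<bar>c\<bar> * Q k x" unfolding Q_def by (rule Q_scale[OF Bne Bb])
            also have "\<dots> \<le> (1/K) * K" using c QK[of k] Qn[of k x] K1 by (intro mult_mono) auto
            finally show "Q k (c *\<^sub>R x) \<le> 1" using K1 by simp
          qed
        qed
      qed
      obtain V where V: "open V" "(0::'g) \<in> V" "V \<subseteq> D"
        using BAR[unfolded barrelled_def, rule_format, OF conjI[OF cD conjI[OF convD conjI[OF circD absD]]]]
        by (elim exE conjE) (intro that)
      define d1 where "d1 = \<epsilon> / 6"
      have d1p: "d1 > 0" unfolding d1_def using ep by simp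
      have "eventually (\<lambda>k. \<xi> k - \<xi>0 \<in> (\<lambda>x. d1 *\<^sub>R x) ` V) sequentially"
        by (rule ev_diff[OF TVS Lx open_scaled[OF TVS V(1)]]) (use d1p V(2) in \<open>auto intro: image_eqI[of 0 _ 0]\<close>)
      then have E1: "eventually (\<lambda>k. ?S (rho (\<xi> k - \<xi>0) (\<psi> k - \<psi>0)) < \<epsilon>/3) sequentially"
      proof eventually_elim
        case (elim k)
        then obtain v where v: "v \<in> V" "\<xi> k - \<xi>0 = d1 *\<^sub>R v" by blast
        have "Q k (d1 *\<^sub>R v) \<le> \<bar>d1\<bar> * Q k v" unfolding Q_def by (rule Q_scale[OF Bne Bb])
        also have "\<dots> \<le> d1 * 1" using v(1) V(3) d1p unfolding D_def by (auto intro!: mult_left_le)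
        finally have "Q k (\<xi> k - \<xi>0) \<le> d1" using v(2) by simp
        then show ?case unfolding Q_def d1_def using ep by simp
      qed
      from E1 E2 E3 show "eventually (\<lambda>k. p (rho (\<xi> k) (\<psi> k) - rho \<xi>0 \<psi>0) < \<epsilon>) sequentially"
      proof eventually_elim
        case (elim k)
        have dec: "rho (\<xi> k) (\<psi> k) - rho \<xi>0 \<psi>0 =
            (rho (\<xi> k - \<xi>0) (\<psi> k - \<psi>0) + rho \<xi>0 (\<psi> k - \<psi>0)) + rho (\<xi> k - \<xi>0) \<psi>0"
          by (simp add: rho_diff1[OF U] rho_diff2[OF U] algebra_simps)
        have "?S (rho (\<xi> k) (\<psi> k) - rho \<xi>0 \<psi>0) \<le>
            ?S (rho (\<xi> k - \<xi>0) (\<psi> k - \<psi>0) + rho \<xi>0 (\<psi> k - \<psi>0)) + ?S (rho (\<xi> k - \<xi>0) \<psi>0)"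
          unfolding dec by (rule SN_tri[OF Bne Bb])
        also have "\<dots> \<le> ?S (rho (\<xi> k - \<xi>0) (\<psi> k - \<psi>0)) + ?S (rho \<xi>0 (\<psi> k - \<psi>0)) + ?S (rho (\<xi> k - \<xi>0) \<psi>0)"
          using SN_tri[OF Bne Bb] by (meson add_mono order_refl)
        finally show ?case unfolding pdef using elim by simp
      qed
    qed
  qed
qed

end


lemma SN_single: "SN ip rho n {f} = (\<lambda>\<psi>. vnorm ip (pin rho n f \<psi>))"
  by (rule ext) (simp add: SN_def)

lemma lc_tvs: "lc_lie_algebra (br :: 'g::{real_vector,topological_space} \<Rightarrow> 'g \<Rightarrow> 'g) \<Longrightarrow> locally_convex_tvs TYPE('g)"
  unfolding lc_lie_algebra_def by (elim conjE)

lemma sh_PiE: "sh n \<xi> f \<in> PiE {..<Suc n} (\<lambda>_. UNIV)"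
  unfolding sh_def PiE_def extensional_def by auto

theorem lemma3p14:
  fixes br :: "'g::{real_vector,topological_space} \<Rightarrow> 'g \<Rightarrow> 'g"
    and sc :: "complex \<Rightarrow> 'v::ab_group_add \<Rightarrow> 'v"
    and ip :: "'v \<Rightarrow> 'v \<Rightarrow> complex"
    and rho :: "'g \<Rightarrow> 'v \<Rightarrow> 'v"
  assumes "lc_lie_algebra br"
    and "barrelled TYPE('g)"
    and "unitary_rep br sc ip rho"
    and "continuous_rep ip rho"
  shows "seq_cont_action (weak_top ip rho) rho \<and> seq_cont_action (strong_top ip rho) rho"
proof
  have TVS: "locally_convex_tvs TYPE('g)" using lc_tvs[OF assms(1)] .
  note MG = main_generic[OF assms(3) assms(4) TVS assms(2)]
  define Cw where "Cw = (\<lambda>n (B :: (nat \<Rightarrow> 'g) set). \<exists>f. f \<in> PiE {..<n} (\<lambda>_. UNIV) \<and> B = {f})"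
  have "weak_top ip rho = seminorm_topology {(\<lambda>\<psi>. SN ip rho n B \<psi>) | n B. Cw n B}"
  proof -
    have "{(\<lambda>\<psi>. vnorm ip (pin rho n f \<psi>)) | n f. f \<in> PiE {..<n} (\<lambda>_. UNIV)} =
          {(\<lambda>\<psi>. SN ip rho n B \<psi>) | n B. Cw n B}"
    proof (intro set_eqI iffI)
      fix x assume "x \<in> {(\<lambda>\<psi>. vnorm ip (pin rho n f \<psi>)) | n f. f \<in> PiE {..<n} (\<lambda>_. UNIV)}"
      then obtain n f where "f \<in> PiE {..<n} (\<lambda>_. UNIV)" "x = (\<lambda>\<psi>. vnorm ip (pin rho n f \<psi>))" by blast
      then have "Cw n {f}" "x = (\<lambda>\<psi>. SN ip rho n {f} \<psi>)" unfolding Cw_def SN_single by auto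
      then show "x \<in> {(\<lambda>\<psi>. SN ip rho n B \<psi>) | n B. Cw n B}" by blast
    next
      fix x assume "x \<in> {(\<lambda>\<psi>. SN ip rho n B \<psi>) | n B. Cw n B}"
      then obtain n B where "Cw n B" "x = (\<lambda>\<psi>. SN ip rho n B \<psi>)" by blast
      then obtain f where "f \<in> PiE {..<n} (\<lambda>_. UNIV)" "x = (\<lambda>\<psi>. vnorm ip (pin rho n f \<psi>))"
        unfolding Cw_def using SN_single by metis
      then show "x \<in> {(\<lambda>\<psi>. vnorm ip (pin rho n f \<psi>)) | n f. f \<in> PiE {..<n} (\<lambda>_. UNIV)}" by blast
    qed
    then show ?thesis unfolding weak_top_def by simp
  qed
  moreover have "seq_cont_action (seminorm_topology {(\<lambda>\<psi>. SN ip rho n B \<psi>) | n B. Cw n B}) rho"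
  proof (rule MG)
    fix n B assume "Cw n B"
    then obtain f where f: "f \<in> PiE {..<n} (\<lambda>_. UNIV)" "B = {f}" unfolding Cw_def by blast
    show "B \<noteq> {} \<and> bddg n B"
    proof
      show "B \<noteq> {}" using f by simp
      show "bddg n B" unfolding bddg_def
      proof (intro allI impI)
        fix U :: "'g set" assume "open U \<and> 0 \<in> U"
        then obtain t where t: "t > 0" "\<forall>s>t. \<forall>x\<in>f ` {..<n}. x \<in> (\<lambda>y. s *\<^sub>R y) ` U"
          using absorb_fin[OF TVS, of U "f ` {..<n}"] by auto
        show "\<exists>t>0. \<forall>s. s > t \<longrightarrow> (\<forall>g\<in>B. \<forall>i<n. g i \<in> (\<lambda>x. s *\<^sub>R x) ` U)"
          using t f(2) by (intro exI[of _ t]) auto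
      qed
    qed
  next
    fix n B \<xi> assume "Cw n B"
    then obtain f where f: "f \<in> PiE {..<n} (\<lambda>_. UNIV)" "B = {f}" unfolding Cw_def by blast
    have "sh n \<xi> ` B = {sh n \<xi> f}" using f(2) by simp
    then show "Cw (Suc n) (sh n \<xi> ` B)" unfolding Cw_def using sh_PiE[of n \<xi> f] by blast
  qed
  ultimately show "seq_cont_action (weak_top ip rho) rho" by simp
next
  have TVS: "locally_convex_tvs TYPE('g)" using lc_tvs[OF assms(1)] .
  note MG = main_generic[OF assms(3) assms(4) TVS assms(2)]
  define Cs where "Cs = (\<lambda>n (B :: (nat \<Rightarrow> 'g) set). B \<noteq> {} \<and> bounded_gpow n B)"
  have "strong_top ip rho = seminorm_topology {(\<lambda>\<psi>. SN ip rho n B \<psi>) | n B. Cs n B}"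
    unfolding strong_top_def Cs_def SN_def ..
  moreover have "seq_cont_action (seminorm_topology {(\<lambda>\<psi>. SN ip rho n B \<psi>) | n B. Cs n B}) rho"
  proof (rule MG)
    fix n B assume "Cs n B"
    then show "B \<noteq> {} \<and> bddg n B" unfolding Cs_def bounded_gpow_def bddg_def by (elim conjE) (intro conjI)
  next
    fix n B \<xi> assume C: "Cs n B"
    then have Bne: "B \<noteq> {}" and bg: "bounded_gpow n B" unfolding Cs_def by auto
    show "Cs (Suc n) (sh n \<xi> ` B)" unfolding Cs_def bounded_gpow_def
    proof (intro conjI allI impI)
      show "sh n \<xi> ` B \<noteq> {}" using Bne by simp
      show "sh n \<xi> ` B \<subseteq> PiE {..<Suc n} (\<lambda>_. UNIV)" by (rule image_subsetI) (rule sh_PiE)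
      fix U :: "'g set" assume U: "open U \<and> 0 \<in> U"
      obtain t1 where t1: "t1 > 0" "\<forall>s>t1. \<forall>f\<in>B. \<forall>i<n. f i \<in> (\<lambda>x. s *\<^sub>R x) ` U"
        using bg[unfolded bounded_gpow_def, THEN conjunct2, rule_format, OF U] by (elim exE conjE) (intro that)
      obtain t2 where t2: "t2 > 0" "\<forall>s>t2. \<xi> \<in> (\<lambda>x. s *\<^sub>R x) ` U"
        using absorb[OF TVS conjunct1[OF U] conjunct2[OF U], of \<xi>] by (elim exE conjE) (intro that)
      show "\<exists>t>0. \<forall>s. s > t \<longrightarrow> (\<forall>g\<in>sh n \<xi> ` B. \<forall>i<Suc n. g i \<in> (\<lambda>x. s *\<^sub>R x) ` U)"
      proof (intro exI[of _ "max t1 t2"] conjI allI impI ballI)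
        show "max t1 t2 > 0" using t1 by simp
        fix s g i assume s: "max t1 t2 < s" and g: "g \<in> sh n \<xi> ` B" and i: "i < Suc n"
        then obtain f where f: "f \<in> B" "g = sh n \<xi> f" by blast
        show "g i \<in> (\<lambda>x. s *\<^sub>R x) ` U"
        proof (cases i)
          case 0
          then show ?thesis using f(2) t2(2) s unfolding sh_def by simp
        next
          case (Suc j)
          then have "j < n" using i by simp
          then show ?thesis using f t1(2) s Suc i unfolding sh_def by simp
        qed
      qed
    qed
  qed
  ultimately show "seq_cont_action (strong_top ip rho) rho" by simp
qed



end
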